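(* Suppose processes know neither $n$ nor any upper bound $D$ on the network causal diameter, i.e., the algorithm executed by a process depends only on its own identifier and not on $n$ or $D$. Then there is no deterministic algorithm that solves leader election in every run (for every number of processes $n\ge2$, every assignment of distinct identifiers, and every sequence of communication graphs satisfying Assumption 1 for some positive integer $D$).
   Context: Model: a finite set $\Pi$ of $n\ge2$ processes with distinct identifiers runs a deterministic algorithm in synchronous lock-step rounds $r=1,2,\dots$. An adversary fixes an infinite sequence of simple directed graphs $\mathcal{G}^1,\mathcal{G}^2,\dots$ on vertex set $\Pi$; $(p\to q)\in\mathcal{G}^r$ iff $q$ receives $p$'s round-$r$ message in round $r$. In round $r$ each process broadcasts a message determined by its current state (received exactly by its out-neighbours in $\mathcal{G}^r$), then computes its new state from its current state and the set of (sender, message) pairs received in round $r$. Leader election: eventually exactly one process irrevocably enters a special state ELECTED and every other process irrevocably enters the state NON-ELECTED (non-leaders need not know the leader's identifier). Causality: $p$ causally influences $q$ in round $t$ if $q=p$ or $(p\to q)\in\mathcal{G}^t$; a causal chain of length $k\ge1$ from $p$ in round $t$ to $q$ is a sequence $p=p_0,\dots,p_k=q$ with $p_i$ causally influencing $p_{i+1}$ in round $t+i$; $d_t(p,q)$ is the least such $k$ ($\infty$ if none). A root component of $\mathcal{G}^t$ is a strongly connected component $\mathcal{R}$ with no edge $(q\to p)$, $p\in\mathcal{R}$, $q\notin\mathcal{R}$. For an interval $I=[r,s]$, an $I$-vertex-stable root component is a set $\mathcal{R}\subseteq\Pi$ that is a root component of $\mathcal{G}^t$ for every $t\in I$. When each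 $\mathcal{G}^x$ has a unique root component $\mathcal{R}^x$, $D^x=\max\{d_x(p,q):p\in\mathcal{R}^x,q\in\Pi\}$ is the network causal diameter of round $x$, and for $I=[r,s]$, $D^I=\max\{D^x:x\in I,\ x+D^x-1\le s\}$ ($\infty$ if empty). An $I$-vertex-stable root component with $I=[r,s]$ is $D$-bounded if $D\ge D^I$ and $D^{s-D+1}\le D$. Assumption 1 (parameter $D$): every $\mathcal{G}^r$ has exactly one root component; every $I$-vertex-stable root component with $|I|\ge D$ is $D$-bounded; and there is an interval $J=[r_{ST},r_{ST}+d]$ with $d>4D$ such that there is a $D$-bounded $J$-vertex-stable root component. *)

theory Defs
  imports Main "HOL-Library.Extended_Nat"
begin

text \<open>Process identifiers are natural numbers; a set P of identifiers is the process set.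
  A communication pattern is G :: nat => (nat * nat) set, G r being the round-r graph
  (rounds are numbered from 1; G 0 is irrelevant).\<close>

datatype status = Undecided | Elected | NonElected

definition simple_graphs :: "nat set \<Rightarrow> (nat \<Rightarrow> (nat \<times> nat) set) \<Rightarrow> bool" where
  "simple_graphs P G \<longleftrightarrow> (\<forall>r. G r \<subseteq> P \<times> P \<and> (\<forall>p. (p, p) \<notin> G r))"

definition infl :: "(nat \<Rightarrow> (nat \<times> nat) set) \<Rightarrow> nat \<Rightarrow> nat \<Rightarrow> nat \<Rightarrow> bool" where
  "infl G t p q \<longleftrightarrow> q = p \<or> (p, q) \<in> G t"

definition causal_chain :: "(nat \<Rightarrow> (nat \<times> nat) set) \<Rightarrow> nat \<Rightarrow> nat \<Rightarrow> nat \<Rightarrow> nat \<Rightarrow> bool" where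
  "causal_chain G t k p q \<longleftrightarrow> k \<ge> 1 \<and>
     (\<exists>c :: nat \<Rightarrow> nat. c 0 = p \<and> c k = q \<and> (\<forall>i<k. infl G (t + i) (c i) (c (Suc i))))"

definition cdist :: "(nat \<Rightarrow> (nat \<times> nat) set) \<Rightarrow> nat \<Rightarrow> nat \<Rightarrow> nat \<Rightarrow> enat" where
  "cdist G t p q = (if \<exists>k. causal_chain G t k p q
                    then enat (LEAST k. causal_chain G t k p q) else \<infinity>)"

definition root_component :: "nat set \<Rightarrow> (nat \<Rightarrow> (nat \<times> nat) set) \<Rightarrow> nat \<Rightarrow> nat set \<Rightarrow> bool" where
  "root_component P G t R \<longleftrightarrow>
     R \<noteq> {} \<and> R \<subseteq> P \<and>
     (\<forall>p\<in>R. \<forall>q\<in>R. (p, q) \<in> (G t)\<^sup>*) \<and>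
     (\<forall>p\<in>R. \<forall>q\<in>P. (p, q) \<in> (G t)\<^sup>* \<and> (q, p) \<in> (G t)\<^sup>* \<longrightarrow> q \<in> R) \<and>
     (\<forall>p\<in>R. \<forall>q. (q, p) \<in> G t \<longrightarrow> q \<in> R)"

definition rootc :: "nat set \<Rightarrow> (nat \<Rightarrow> (nat \<times> nat) set) \<Rightarrow> nat \<Rightarrow> nat set" where
  "rootc P G t = (THE R. root_component P G t R)"

text \<open>network causal diameter D^x (meaningful when G x has a unique root component)\<close>
definition net_diam :: "nat set \<Rightarrow> (nat \<Rightarrow> (nat \<times> nat) set) \<Rightarrow> nat \<Rightarrow> enat" where
  "net_diam P G x = Sup {cdist G x p q | p q. p \<in> rootc P G x \<and> q \<in> P}"

text \<open>D^I for I = [r,s]; the condition x + D^x - 1 <= s is written x + D^x <= s + 1\<close>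
definition interval_diam :: "nat set \<Rightarrow> (nat \<Rightarrow> (nat \<times> nat) set) \<Rightarrow> nat \<Rightarrow> nat \<Rightarrow> enat" where
  "interval_diam P G r s =
     (let S = {net_diam P G x | x. r \<le> x \<and> x \<le> s \<and> enat x + net_diam P G x \<le> enat s + 1}
      in if S = {} then \<infinity> else Sup S)"

definition vstable :: "nat set \<Rightarrow> (nat \<Rightarrow> (nat \<times> nat) set) \<Rightarrow> nat \<Rightarrow> nat \<Rightarrow> nat set \<Rightarrow> bool" where
  "vstable P G r s R \<longleftrightarrow> (\<forall>t. r \<le> t \<and> t \<le> s \<longrightarrow> root_component P G t R)"

definition D_bounded :: "nat set \<Rightarrow> (nat \<Rightarrow> (nat \<times> nat) set) \<Rightarrow> nat \<Rightarrow> nat \<Rightarrow> nat \<Rightarrow> bool" where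
  "D_bounded P G D r s \<longleftrightarrow>
     interval_diam P G r s \<le> enat D \<and> net_diam P G (s + 1 - D) \<le> enat D"

definition assumption1 :: "nat set \<Rightarrow> (nat \<Rightarrow> (nat \<times> nat) set) \<Rightarrow> nat \<Rightarrow> bool" where
  "assumption1 P G D \<longleftrightarrow>
     (\<forall>r\<ge>1. \<exists>!R. root_component P G r R) \<and>
     (\<forall>r s R. 1 \<le> r \<and> r \<le> s \<and> s + 1 - r \<ge> D \<and> vstable P G r s R \<longrightarrow> D_bounded P G D r s) \<and>
     (\<exists>rST d R. 1 \<le> rST \<and> d > 4 * D \<and> vstable P G rST (rST + d) R \<and> D_bounded P G D rST (rST + d))"

text \<open>The algorithm is given by an initial
  state depending only on the own identifier, a message function of the current state and
  a transition function of the current state and the set of (sender, message) pairs received.\<close>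
primrec run :: "(nat \<Rightarrow> 's) \<Rightarrow> ('s \<Rightarrow> 'm) \<Rightarrow> ('s \<Rightarrow> (nat \<times> 'm) set \<Rightarrow> 's)
                 \<Rightarrow> (nat \<Rightarrow> (nat \<times> nat) set) \<Rightarrow> nat \<Rightarrow> nat \<Rightarrow> 's" where
  "run init msg step G 0 p = init p"
| "run init msg step G (Suc r) p =
     step (run init msg step G r p)
           {(q, msg (run init msg step G r q)) | q. (q, p) \<in> G (Suc r)}"

definition solves_LE :: "(nat \<Rightarrow> 's) \<Rightarrow> ('s \<Rightarrow> 'm) \<Rightarrow> ('s \<Rightarrow> (nat \<times> 'm) set \<Rightarrow> 's)
                 \<Rightarrow> ('s \<Rightarrow> status) \<Rightarrow> nat set \<Rightarrow> (nat \<Rightarrow> (nat \<times> nat) set) \<Rightarrow> bool" where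
  "solves_LE init msg step out P G \<longleftrightarrow>
     (\<forall>p\<in>P. \<forall>r r'. r \<le> r' \<and> out (run init msg step G r p) \<noteq> Undecided \<longrightarrow>
                    out (run init msg step G r' p) = out (run init msg step G r p)) \<and>
     (\<exists>r. \<exists>l\<in>P. out (run init msg step G r l) = Elected \<and>
               (\<forall>q\<in>P. q \<noteq> l \<longrightarrow> out (run init msg step G r q) = NonElected))"

end

theory Submission
  imports Defs
begin


lemma run_local:
  assumes "\<And>t p. p \<in> C (Suc t) \<Longrightarrow> p \<in> C t \<and> {x. (x,p) \<in> G (Suc t)} = {x. (x,p) \<in> G' (Suc t)} \<and> {x. (x,p) \<in> G (Suc t)} \<subseteq> C t"
  shows "p \<in> C t \<Longrightarrow> run init msg step G t p = run init msg step G' t p"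
proof (induction t arbitrary: p)
  case 0 then show ?case by simp
next
  case (Suc t)
  from assms[OF Suc.prems] have h: "p \<in> C t" "{x. (x,p) \<in> G (Suc t)} = {x. (x,p) \<in> G' (Suc t)}" "{x. (x,p) \<in> G (Suc t)} \<subseteq> C t" by auto
  have "{(q, msg (run init msg step G t q)) | q. (q,p) \<in> G (Suc t)} = {(q, msg (run init msg step G' t q)) | q. (q,p) \<in> G' (Suc t)}"
  proof -
    let ?f = "\<lambda>q. (q, msg (run init msg step G t q))"
    let ?g = "\<lambda>q. (q, msg (run init msg step G' t q))"
    have A: "{(q, msg (run init msg step G t q)) | q. (q,p) \<in> G (Suc t)} = ?f ` {q. (q,p) \<in> G (Suc t)}" by blast
    have B: "{(q, msg (run init msg step G' t q)) | q. (q,p) \<in> G' (Suc t)} = ?g ` {q. (q,p) \<in> G' (Suc t)}" by blast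
    have C: "?f ` {q. (q,p) \<in> G (Suc t)} = ?g ` {q. (q,p) \<in> G (Suc t)}"
    proof (rule image_cong)
      fix q assume "q \<in> {q. (q,p) \<in> G (Suc t)}"
      then have "q \<in> C t" using h(3) by blast
      then show "?f q = ?g q" using Suc.IH by simp
    qed simp
    show ?thesis unfolding A B C by (simp only: h(2))
  qed
  then show ?case using Suc.IH[OF h(1)] by simp
qed

lemma source_root:
  assumes "s \<in> P" "\<And>x. (x,s) \<notin> E t" "\<And>y. y \<in> P \<Longrightarrow> (s,y) \<in> (E t)\<^sup>*"
  shows "root_component P E t R \<longleftrightarrow> R = {s}"
proof -
  have noin: "\<And>x. (x,s) \<in> (E t)\<^sup>* \<Longrightarrow> x = s" using assms(2) by (auto elim: rtranclE)
  show ?thesis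
  proof
    assume rc: "root_component P E t R"
    then obtain p where p: "p \<in> R" unfolding root_component_def by blast
    have clos: "\<And>x. (x,p) \<in> (E t)\<^sup>* \<Longrightarrow> x \<in> R"
    proof -
      fix x assume "(x,p) \<in> (E t)\<^sup>*"
      then show "x \<in> R"
      proof (induction rule: converse_rtrancl_induct)
        case base then show ?case using p .
      next
        case (step y z) then show ?case using rc unfolding root_component_def by blast
      qed
    qed
    have "p \<in> P" using rc p unfolding root_component_def by blast
    then have sR: "s \<in> R" using clos assms(3) by blast
    have "\<And>x. x \<in> R \<Longrightarrow> x = s" using rc sR noin unfolding root_component_def by blast
    then show "R = {s}" using sR by blast
  next
    assume "R = {s}"
    then show "root_component P E t R" using assms noin unfolding root_component_def by auto
  qed
qed

definition starG :: "nat set \<Rightarrow> nat \<Rightarrow> (nat \<times> nat) set" where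
  "starG P c = {(c,p) | p. p \<in> P \<and> p \<noteq> c}"

lemma star_root:
  assumes "G t = starG P c" "c \<in> P"
  shows "root_component P G t R \<longleftrightarrow> R = {c}"
  by (rule source_root) (use assms in \<open>auto simp: starG_def\<close>)

lemma cdist_star:
  assumes "G t = starG P c" "p \<in> P"
  shows "cdist G t c p = 1"
proof -
  have cc: "causal_chain G t 1 c p"
    unfolding causal_chain_def infl_def
    by (rule conjI, simp, rule exI[of _ "\<lambda>i. if i = 0 then c else p"]) (use assms in \<open>auto simp: starG_def\<close>)
  have "(LEAST k. causal_chain G t k c p) = 1"
    by (rule Least_equality) (use cc in \<open>auto simp: causal_chain_def\<close>)
  then show ?thesis using cc unfolding cdist_def by (auto simp: one_enat_def)
qed

lemma net_diam_star:
  assumes "G t = starG P c" "c \<in> P"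
  shows "net_diam P G t = 1"
proof -
  have sr: "\<And>R. root_component P G t R \<longleftrightarrow> R = {c}"
    using star_root[of G t P c] assms by blast
  have "rootc P G t = {c}" unfolding rootc_def
    by (rule the_equality) (auto simp: sr)
  moreover have "{cdist G t p q | p q. p \<in> {c} \<and> q \<in> P} = {1}"
  proof -
    have cd: "\<And>p. p \<in> P \<Longrightarrow> cdist G t c p = 1" using cdist_star[of G t P c] assms by blast
    have "{cdist G t p q | p q. p \<in> {c} \<and> q \<in> P} = (\<lambda>q. cdist G t c q) ` P" by auto
    also have "\<dots> = (\<lambda>q. 1) ` P" using cd by (auto simp: image_def)
    also have "\<dots> = {1}" using assms(2) by auto
    finally show ?thesis .
  qed
  ultimately show ?thesis unfolding net_diam_def by simp
qed

lemma valid: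
  assumes cP: "c \<in> P" and k: "k \<ge> 1"
    and star: "\<And>t. t \<ge> k \<Longrightarrow> G t = starG P c"
    and pre: "\<And>t. 1 \<le> t \<Longrightarrow> t < k \<Longrightarrow> (\<exists>R. R \<noteq> {c} \<and> (\<forall>R'. root_component P G t R' \<longleftrightarrow> R' = R))"
  shows "assumption1 P G k"
proof -
  have nd: "\<And>x. x \<ge> k \<Longrightarrow> net_diam P G x = 1" using net_diam_star star cP by blast
  have sr: "\<And>t R. t \<ge> k \<Longrightarrow> root_component P G t R \<longleftrightarrow> R = {c}"
    using star_root star cP by blast
  have db: "D_bounded P G k r s" if "k \<le> r" "r \<le> s" "s + 1 - r \<ge> k" for r s
  proof -
    have S: "{net_diam P G x | x. r \<le> x \<and> x \<le> s \<and> enat x + net_diam P G x \<le> enat s + 1} = {1}"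
    proof
      show "{net_diam P G x | x. r \<le> x \<and> x \<le> s \<and> enat x + net_diam P G x \<le> enat s + 1} \<subseteq> {1}"
        using nd that by auto
      have "enat r + 1 \<le> enat s + 1" using that by (simp add: one_enat_def)
      then show "{1} \<subseteq> {net_diam P G x | x. r \<le> x \<and> x \<le> s \<and> enat x + net_diam P G x \<le> enat s + 1}"
        using nd that by force
    qed
    have "interval_diam P G r s = 1" unfolding interval_diam_def Let_def S by simp
    moreover have "net_diam P G (s + 1 - k) = 1" using nd that by auto
    ultimately show ?thesis unfolding D_bounded_def using k by (simp add: one_enat_def)
  qed
  have uniq: "\<exists>!R. root_component P G t R" if t1: "t \<ge> 1" for t
  proof (cases "t \<ge> k")
    case True then show ?thesis using sr[OF True] by auto
  next
    case False then have "t < k" by simp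
    from pre[OF t1 this] obtain R where "\<forall>R'. root_component P G t R' \<longleftrightarrow> R' = R" by blast
    then show ?thesis by auto
  qed
  have c2: "D_bounded P G k r s" if h: "1 \<le> r" "r \<le> s" "s + 1 - r \<ge> k" "vstable P G r s R" for r s R
  proof (cases "k \<le> r")
    case True then show ?thesis using db that by auto
  next
    case False
    have "s \<ge> k" using that False by linarith
    then have "R = {c}" using that(4) sr \<open>r \<le> s\<close> unfolding vstable_def by blast
    moreover obtain R0 where "R0 \<noteq> {c}" "\<forall>R'. root_component P G r R' \<longleftrightarrow> R' = R0" using pre[OF h(1)] False by (meson not_le)
    moreover have "root_component P G r R" using that(4) \<open>r \<le> s\<close> unfolding vstable_def by auto
    ultimately show ?thesis by auto
  qed
  have c3: "vstable P G k (k + (4*k+1)) {c}" unfolding vstable_def using sr by auto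
  have c3': "D_bounded P G k k (k + (4*k+1))" by (rule db) auto
  have A1: "\<forall>r\<ge>1. \<exists>!R. root_component P G r R" using uniq by blast
  have A2: "\<forall>r s R. 1 \<le> r \<and> r \<le> s \<and> s + 1 - r \<ge> k \<and> vstable P G r s R \<longrightarrow> D_bounded P G k r s"
    using c2 by blast
  have A3: "\<exists>rST d R. 1 \<le> rST \<and> d > 4 * k \<and> vstable P G rST (rST + d) R \<and> D_bounded P G k rST (rST + d)"
    by (rule exI[of _ k], rule exI[of _ "4*k+1"], rule exI[of _ "{c}"]) (use c3 c3' k in simp)
  show ?thesis unfolding assumption1_def using A1 A2 A3 by blast
qed



definition prv :: "nat \<Rightarrow> nat \<Rightarrow> nat" where "prv L p = (if p = 2 then L+1 else p - 1)"
definition bkd :: "nat \<Rightarrow> nat \<Rightarrow> nat \<Rightarrow> nat" where "bkd L j p = (if p \<le> j then j - p else j + L - p)"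

lemma prv_in: "p \<in> {2..<L+2} \<Longrightarrow> L \<ge> 2 \<Longrightarrow> prv L p \<in> {2..<L+2}"
  by (auto simp: prv_def)
lemma prv_ne: "p \<in> {2..<L+2} \<Longrightarrow> L \<ge> 2 \<Longrightarrow> prv L p \<noteq> p"
  by (auto simp: prv_def)
lemma bkd_zero: "p \<in> {2..<L+2} \<Longrightarrow> j \<in> {2..<L+2} \<Longrightarrow> bkd L j p = 0 \<longleftrightarrow> p = j"
  by (auto simp: bkd_def)
lemma bkd_prv1: "y \<in> {2..<L+2} \<Longrightarrow> f \<in> {2..<L+2} \<Longrightarrow> y \<noteq> f \<Longrightarrow> bkd L (prv L y) f = bkd L y f - 1"
  by (auto simp: bkd_def prv_def)
lemma bkd_prv2: "p \<in> {2..<L+2} \<Longrightarrow> l \<in> {2..<L+2} \<Longrightarrow> bkd L l p + 1 < L \<Longrightarrow> bkd L l (prv L p) = bkd L l p + 1"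
  by (auto simp: bkd_def prv_def)
lemma bkd_inj: "l \<in> {2..<L+2} \<Longrightarrow> inj_on (bkd L l) {2..<L+2}"
  by (auto simp: bkd_def inj_on_def split: if_splits)

lemma ring_reach:
  assumes f: "f \<in> {2..<L+2}" and af: "(a,f) \<in> E\<^sup>*"
    and st: "\<And>y. y \<in> {2..<L+2} \<Longrightarrow> y \<noteq> f \<Longrightarrow> (prv L y, y) \<in> E \<or> (a,y) \<in> E\<^sup>*"
    and L: "L \<ge> 2"
  shows "y \<in> {2..<L+2} \<Longrightarrow> (a,y) \<in> E\<^sup>*"
proof -
  have "\<forall>y. y \<in> {2..<L+2} \<longrightarrow> bkd L y f = m \<longrightarrow> (a,y) \<in> E\<^sup>*" for m
  proof (induction m)
    case 0 then show ?case using bkd_zero[of f L] af f by blast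
  next
    case (Suc m)
    show ?case
    proof (intro allI impI)
      fix y assume y: "y \<in> {2..<L+2}" and b: "bkd L y f = Suc m"
      then have yf: "y \<noteq> f" using bkd_zero[of f L y] f by auto
      from st[OF y yf] show "(a,y) \<in> E\<^sup>*"
      proof
        assume e: "(prv L y, y) \<in> E"
        have "bkd L (prv L y) f = m" using bkd_prv1[OF y f yf] b by simp
        then have "(a, prv L y) \<in> E\<^sup>*" using Suc.IH prv_in[OF y L] by blast
        then show ?thesis using e by (rule rtrancl_into_rtrancl)
      qed
    qed
  qed
  then show "y \<in> {2..<L+2} \<Longrightarrow> (a,y) \<in> E\<^sup>*" by blast
qed

lemma card_arc:
  assumes "l \<in> {2..<L+2}"
  shows "card {p \<in> {2..<L+2}. bkd L l p \<le> m} \<le> Suc m"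
proof -
  have "card {p \<in> {2..<L+2}. bkd L l p \<le> m} \<le> card {..m}"
    by (rule card_inj_on_le[where f="bkd L l"]) (use bkd_inj[OF assms] in \<open>auto simp: inj_on_def\<close>)
  then show ?thesis by simp
qed



theorem theorem4:
  fixes init :: "nat \<Rightarrow> 's" and msg :: "'s \<Rightarrow> 'm"
    and step :: "'s \<Rightarrow> (nat \<times> 'm) set \<Rightarrow> 's" and out :: "'s \<Rightarrow> status"
  shows "\<not> (\<forall>(P :: nat set) G (D :: nat).
              finite P \<and> card P \<ge> 2 \<and> simple_graphs P G \<and> D \<ge> 1 \<and> assumption1 P G D
              \<longrightarrow> solves_LE init msg step out P G)"
proof
  assume H: "\<forall>(P :: nat set) G (D :: nat).
              finite P \<and> card P \<ge> 2 \<and> simple_graphs P G \<and> D \<ge> 1 \<and> assumption1 P G D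
              \<longrightarrow> solves_LE init msg step out P G"
  define G0 :: "nat \<Rightarrow> (nat \<times> nat) set" where "G0 = (\<lambda>t. starG {0,1} 0)"
  have v0: "assumption1 {0,1} G0 1" by (rule valid[of 0]) (auto simp: G0_def)
  have s0: "simple_graphs {0,1} G0" unfolding simple_graphs_def G0_def starG_def by auto
  have "solves_LE init msg step out {0,1} G0" using H[rule_format, of "{0,1}" G0 1] v0 s0 by simp
  then obtain T e where e: "e \<in> {0,1}" "out (run init msg step G0 T e) = Elected"
    unfolding solves_LE_def by blast
  define L where "L = 2*T+2"
  define Rg where "Rg = {2::nat..<L+2}"
  define q where "q = (2::nat)"
  define Gt where "Gt t = (if t \<le> T then {(prv L p, p) | p. p \<in> Rg} else starG Rg q)" for t
  have L2: "L \<ge> 2" unfolding L_def by simp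
  have qR: "q \<in> Rg" unfolding q_def Rg_def using L2 by simp
  have finR: "finite Rg" unfolding Rg_def by simp
  have cardR: "card Rg = L" unfolding Rg_def by simp
  have ringroot: "root_component Rg Gt t R \<longleftrightarrow> R = Rg" if t: "t \<le> T" for t R
  proof -
    have E: "Gt t = {(prv L p, p) | p. p \<in> Rg}" using t unfolding Gt_def by simp
    have sc: "(x,y) \<in> (Gt t)\<^sup>*" if "x \<in> Rg" "y \<in> Rg" for x y
      by (rule ring_reach[of x L x "Gt t"]) (use that L2 E in \<open>auto simp: Rg_def\<close>)
    have inR: "\<And>x p. (x,p) \<in> Gt t \<Longrightarrow> x \<in> Rg \<and> p \<in> Rg" using E prv_in L2 unfolding Rg_def by auto
    show ?thesis
    proof
      assume rc: "root_component Rg Gt t R"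
      then obtain p where p: "p \<in> R" "R \<subseteq> Rg" unfolding root_component_def by blast
      then have "\<And>y. y \<in> Rg \<Longrightarrow> y \<in> R" using rc sc unfolding root_component_def by blast
      then show "R = Rg" using p by blast
    next
      assume "R = Rg"
      then show "root_component Rg Gt t R" unfolding root_component_def using sc inR qR by blast
    qed
  qed
  have vT: "assumption1 Rg Gt (T+1)"
  proof (rule valid[of q])
    show "q \<in> Rg" by (rule qR)
    show "\<And>t. T + 1 \<le> t \<Longrightarrow> Gt t = starG Rg q" unfolding Gt_def by simp
    fix t assume "1 \<le> t" "t < T + 1"
    then have "\<forall>R'. root_component Rg Gt t R' \<longleftrightarrow> R' = Rg" using ringroot by simp
    moreover have "Rg \<noteq> {q}"
    proof -
      have "3 \<in> Rg" unfolding Rg_def using L2 by simp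
      then show ?thesis unfolding q_def by auto
    qed
    ultimately show "\<exists>R. R \<noteq> {q} \<and> (\<forall>R'. root_component Rg Gt t R' \<longleftrightarrow> R' = R)" by blast
  qed simp
  have sT: "simple_graphs Rg Gt" unfolding simple_graphs_def
  proof
    fix r
    show "Gt r \<subseteq> Rg \<times> Rg \<and> (\<forall>p. (p, p) \<notin> Gt r)"
      using prv_in[of _ L] prv_ne[of _ L] L2 qR unfolding Gt_def starG_def Rg_def by (auto, metis)
  qed
  have "solves_LE init msg step out Rg Gt" using H[rule_format, of Rg Gt "T+1"] vT sT finR cardR L2 by simp
  then obtain Rl l where l: "l \<in> Rg" "out (run init msg step Gt Rl l) = Elected"
    unfolding solves_LE_def by blast
  define F where "F t = {p \<in> Rg. bkd L l p \<le> T - t \<or> bkd L q p \<le> T - t}" for t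
  define P' where "P' = Rg \<union> {0,1}"
  define G' where "G' t = (if t \<le> T then {(prv L p, p) | p. p \<in> F t} \<union> {(0,p) | p. p \<in> P' \<and> p \<notin> F t \<and> p \<noteq> 0}
                           else starG P' q)" for t
  have FR: "F t \<subseteq> Rg" for t unfolding F_def by auto
  have Rg2: "\<And>p. p \<in> Rg \<Longrightarrow> p \<ge> 2" unfolding Rg_def by auto
  have free: "\<exists>f\<in>Rg. f \<notin> F t" if "1 \<le> t" "t \<le> T" for t
  proof (rule ccontr)
    assume "\<not> ?thesis"
    then have sub: "Rg \<subseteq> F t" by blast
    have "F t \<subseteq> {p \<in> Rg. bkd L l p \<le> T - t} \<union> {p \<in> Rg. bkd L q p \<le> T - t}" unfolding F_def by auto
    then have "card (F t) \<le> card ({p \<in> Rg. bkd L l p \<le> T - t} \<union> {p \<in> Rg. bkd L q p \<le> T - t})"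
      by (rule card_mono[rotated]) (use finR in simp)
    also have "\<dots> \<le> card {p \<in> Rg. bkd L l p \<le> T - t} + card {p \<in> Rg. bkd L q p \<le> T - t}"
      by (rule card_Un_le)
    also have "\<dots> \<le> Suc (T - t) + Suc (T - t)"
      using card_arc[of l L "T - t"] card_arc[of q L "T - t"] l(1) qR unfolding Rg_def by simp
    finally have "card (F t) < L" using that unfolding L_def by linarith
    moreover have "card Rg \<le> card (F t)" using sub finR FR by (meson card_mono finite_subset)
    ultimately show False using cardR by simp
  qed
  have Oroot: "root_component P' G' t R \<longleftrightarrow> R = {0}" if t: "1 \<le> t" "t \<le> T" for t R
  proof (rule source_root)
    have E: "G' t = {(prv L p, p) | p. p \<in> F t} \<union> {(0,p) | p. p \<in> P' \<and> p \<notin> F t \<and> p \<noteq> 0}"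
      using t unfolding G'_def by simp
    show "0 \<in> P'" unfolding P'_def by simp
    show "\<And>x. (x, 0) \<notin> G' t" using E FR Rg2 by fastforce
    obtain f where f: "f \<in> Rg" "f \<notin> F t" using free[OF t] by blast
    have f0: "(0,f) \<in> G' t" using E f Rg2 unfolding P'_def by fastforce
    show "(0,y) \<in> (G' t)\<^sup>*" if y: "y \<in> P'" for y
    proof -
      consider "y = 0" | "y = 1" | "y \<in> Rg" using y unfolding P'_def by blast
      then show ?thesis
      proof cases
        case 1 then show ?thesis by simp
      next
        case 2 then have "(0,y) \<in> G' t" using E FR Rg2 unfolding P'_def by fastforce
        then show ?thesis by blast
      next
        case 3
        show ?thesis
        proof (rule ring_reach[of f L 0 "G' t" y])
          show "f \<in> {2..<L+2}" using f unfolding Rg_def by simp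
          show "(0, f) \<in> (G' t)\<^sup>*" using f0 by blast
          show "L \<ge> 2" by (rule L2)
          show "y \<in> {2..<L+2}" using 3 unfolding Rg_def by simp
          fix y' assume y': "y' \<in> {2..<L+2}" "y' \<noteq> f"
          show "(prv L y', y') \<in> G' t \<or> (0, y') \<in> (G' t)\<^sup>*"
          proof (cases "y' \<in> F t")
            case True then show ?thesis using E by blast
          next
            case False
            then have "(0,y') \<in> G' t" using E y' unfolding P'_def Rg_def by auto
            then show ?thesis by blast
          qed
        qed
      qed
    qed
  qed
  have vO: "assumption1 P' G' (T+1)"
  proof (rule valid[of q])
    show "q \<in> P'" using qR unfolding P'_def by simp
    show "\<And>t. T + 1 \<le> t \<Longrightarrow> G' t = starG P' q" unfolding G'_def by simp
    fix t assume "1 \<le> t" "t < T + 1"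
    then have "\<forall>R'. root_component P' G' t R' \<longleftrightarrow> R' = {0}" using Oroot by simp
    moreover have "{0::nat} \<noteq> {q}" unfolding q_def by simp
    ultimately show "\<exists>R. R \<noteq> {q} \<and> (\<forall>R'. root_component P' G' t R' \<longleftrightarrow> R' = R)" by blast
  qed simp
  have sO: "simple_graphs P' G'" unfolding simple_graphs_def
  proof
    fix r
    have a: "\<And>p. p \<in> F r \<Longrightarrow> prv L p \<in> Rg \<and> prv L p \<noteq> p"
      using FR prv_in[of _ L] prv_ne[of _ L] L2 unfolding Rg_def by blast
    show "G' r \<subseteq> P' \<times> P' \<and> (\<forall>p. (p, p) \<notin> G' r)"
      using a FR qR unfolding G'_def starG_def P'_def by (auto, metis)
  qed
  have finP: "finite P'" unfolding P'_def using finR by simp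
  have cardP: "card P' \<ge> 2"
  proof -
    have "card Rg \<le> card P'" using finP unfolding P'_def by (intro card_mono) auto
    then show ?thesis using cardR L2 by simp
  qed
  have solO: "solves_LE init msg step out P' G'" using H[rule_format, of P' G' "T+1"] vO sO finP cardP by simp
  have viewe: "run init msg step G0 t p = run init msg step G' t p"
    if "p \<in> (if t \<le> T then {0,1} else {})" for t p
  proof (rule run_local[where C="\<lambda>t. if t \<le> T then {0,1} else {}"])
    show "p \<in> (if t \<le> T then {0,1} else {})" by (rule that)
    fix t p assume p: "p \<in> (if Suc t \<le> T then {0::nat,1} else {})"
    then have st: "Suc t \<le> T" and p01: "p = 0 \<or> p = 1" by (auto split: if_splits)
    have E: "G' (Suc t) = {(prv L p, p) | p. p \<in> F (Suc t)} \<union> {(0,p) | p. p \<in> P' \<and> p \<notin> F (Suc t) \<and> p \<noteq> 0}"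
      using st unfolding G'_def by simp
    have n0: "0 \<notin> F (Suc t)" "1 \<notin> F (Suc t)" using FR Rg2 by fastforce+
    have eq: "{x. (x,p) \<in> G0 (Suc t)} = {x. (x,p) \<in> G' (Suc t)}"
      using p01 n0 unfolding E G0_def starG_def P'_def by auto
    have pc: "p \<in> (if t \<le> T then {0,1} else {})" using st p01 by simp
    have sb: "{x. (x, p) \<in> G0 (Suc t)} \<subseteq> (if t \<le> T then {0,1} else {})"
      using st unfolding G0_def starG_def by auto
    show "p \<in> (if t \<le> T then {0,1} else {}) \<and> {x. (x, p) \<in> G0 (Suc t)} = {x. (x, p) \<in> G' (Suc t)} \<and>
          {x. (x, p) \<in> G0 (Suc t)} \<subseteq> (if t \<le> T then {0,1} else {})"
      using eq pc sb by blast
  qed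
  define C where "C t = (if t \<le> T then F t else {l,q})" for t
  have lq: "l \<in> C t \<and> q \<in> C t" for t
    unfolding C_def F_def using l(1) qR bkd_zero[of l L l] bkd_zero[of q L q] unfolding Rg_def by auto
  have viewl: "run init msg step Gt t p = run init msg step G' t p" if "p \<in> C t" for t p
  proof (rule run_local[where C=C])
    show "p \<in> C t" by (rule that)
    fix t p assume p: "p \<in> C (Suc t)"
    show "p \<in> C t \<and> {x. (x, p) \<in> Gt (Suc t)} = {x. (x, p) \<in> G' (Suc t)} \<and> {x. (x, p) \<in> Gt (Suc t)} \<subseteq> C t"
    proof (cases "Suc t \<le> T")
      case True
      then have pF: "p \<in> F (Suc t)" using p unfolding C_def by simp
      then have pR: "p \<in> Rg" using FR by blast
      have pC: "p \<in> C t" using pF True unfolding C_def F_def by auto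
      have e1: "{x. (x, p) \<in> Gt (Suc t)} = {prv L p}" using True pR unfolding Gt_def by auto
      have e2: "{x. (x, p) \<in> G' (Suc t)} = {prv L p}" using True pF unfolding G'_def by auto
      have b: "bkd L l p \<le> T - Suc t \<or> bkd L q p \<le> T - Suc t" using pF unfolding F_def by simp
      have "prv L p \<in> F t"
      proof -
        have pr: "prv L p \<in> Rg" using prv_in[of p L] pR L2 unfolding Rg_def by simp
        have lt: "T - Suc t + 1 < L" unfolding L_def by simp
        from b show ?thesis
        proof
          assume h: "bkd L l p \<le> T - Suc t"
          then have "bkd L l (prv L p) = bkd L l p + 1"
            using bkd_prv2[of p L l] pR l(1) lt unfolding Rg_def by simp
          then show ?thesis using h pr True unfolding F_def by auto
        next
          assume h: "bkd L q p \<le> T - Suc t"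
          then have "bkd L q (prv L p) = bkd L q p + 1"
            using bkd_prv2[of p L q] pR qR lt unfolding Rg_def by simp
          then show ?thesis using h pr True unfolding F_def by auto
        qed
      qed
      then have "prv L p \<in> C t" using True unfolding C_def by simp
      then show ?thesis using pC e1 e2 by simp
    next
      case False
      then have pl: "p = l \<or> p = q" using p unfolding C_def by simp
      then have pR: "p \<in> Rg" using l(1) qR by blast
      have e: "{x. (x, p) \<in> Gt (Suc t)} = {x. (x, p) \<in> G' (Suc t)}"
        using False pR unfolding Gt_def G'_def starG_def P'_def by auto
      have "{x. (x, p) \<in> Gt (Suc t)} \<subseteq> {q}" using False unfolding Gt_def starG_def by auto
      then show ?thesis using e pl lq by blast
    qed
  qed
  have eE: "out (run init msg step G' T e) = Elected"
    using viewe[of e T] e by simp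
  have lE: "out (run init msg step G' Rl l) = Elected"
    using viewl[of l Rl] lq l(2) by simp
  have eP: "e \<in> P'" "l \<in> P'" using e(1) l(1) unfolding P'_def by auto
  have el: "e \<noteq> l" using e(1) Rg2[OF l(1)] by auto
  from solO obtain R0 l' where irr: "\<forall>p\<in>P'. \<forall>r r'. r \<le> r' \<and> out (run init msg step G' r p) \<noteq> Undecided \<longrightarrow>
                    out (run init msg step G' r' p) = out (run init msg step G' r p)"
    and l': "l' \<in> P'" "out (run init msg step G' R0 l') = Elected"
    and oth: "\<forall>x\<in>P'. x \<noteq> l' \<longrightarrow> out (run init msg step G' R0 x) = NonElected"
    unfolding solves_LE_def by blast
  have irr': "\<And>p r r'. p \<in> P' \<Longrightarrow> r \<le> r' \<Longrightarrow> out (run init msg step G' r p) \<noteq> Undecided \<Longrightarrow>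
                    out (run init msg step G' r' p) = out (run init msg step G' r p)"
    using irr by blast
  define M where "M = max R0 (max T Rl)"
  have M: "T \<le> M" "Rl \<le> M" "R0 \<le> M" unfolding M_def by auto
  have eM: "out (run init msg step G' M e) = Elected" using irr'[OF eP(1) M(1)] eE by simp
  have lM: "out (run init msg step G' M l) = Elected" using irr'[OF eP(2) M(2)] lE by simp
  show False
  proof (cases "e = l'")
    case True
    then have "out (run init msg step G' R0 l) = NonElected" using oth eP el by auto
    then have "out (run init msg step G' M l) = NonElected" using irr'[OF eP(2) M(3)] by simp
    then show False using lM by simp
  next
    case False
    then have "out (run init msg step G' R0 e) = NonElected" using oth eP by auto
    then have "out (run init msg step G' M e) = NonElected" using irr'[OF eP(1) M(3)] by simp
    then show False using eM by simp
  qed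
qed

end
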